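(* For every finite simple graph $G$ and every positive integer $n$, $$\chi_i(G)\le \chi_i(S_G^n)\le \chi_i(G)+1.$$ Moreover, both bounds are attained: there exist graphs $G$ (e.g. $G=K_p$ with $p\ge 3$, or $G=C_k$ with $k\ge 3$, $k\not\equiv 0\pmod 4$) with $\chi_i(S_G^n)=\chi_i(G)$ for all $n\ge 1$, and there exist graphs $G$ (e.g. $G=C_k$ with $k\equiv 0\pmod 4$) with $\chi_i(S_G^n)=\chi_i(G)+1$ for all $n\ge 2$.
   Context: For a graph $H$, an injective $k$-coloring is a map $f:V(H)\to\{1,\dots,k\}$ such that any two distinct vertices $u,w$ with $f(u)=f(w)$ have no common neighbor; $\chi_i(H)$ is the least such $k$. For a graph $G$ and positive integer $n$, the generalized Sierpiński graph $S_G^n$ has vertex set $V(G)^n$, and $(u_1,\dots,u_n)$, $(v_1,\dots,v_n)$ are adjacent if and only if there is $d\in\{1,\dots,n\}$ with $u_i=v_i$ for $i<d$, $u_dv_d\in E(G)$, and $u_i=v_d$, $v_i=u_d$ for all $i>d$. $K_p$ is the complete graph on $p$ vertices and $C_k$ the cycle on $k$ vertices. *)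

theory Defs
  imports Main
begin

definition simple_graph :: "'a set \<Rightarrow> ('a \<Rightarrow> 'a \<Rightarrow> bool) \<Rightarrow> bool" where
  "simple_graph V E \<longleftrightarrow> finite V \<and> (\<forall>u v. E u v \<longrightarrow> u \<in> V \<and> v \<in> V)
     \<and> (\<forall>u v. E u v \<longrightarrow> E v u) \<and> (\<forall>u. \<not> E u u)"

definition injective_coloring ::
  "'a set \<Rightarrow> ('a \<Rightarrow> 'a \<Rightarrow> bool) \<Rightarrow> nat \<Rightarrow> ('a \<Rightarrow> nat) \<Rightarrow> bool" where
  "injective_coloring V E k f \<longleftrightarrow> (\<forall>v\<in>V. f v \<in> {1..k}) \<and>
     (\<forall>u\<in>V. \<forall>w\<in>V. u \<noteq> w \<and> f u = f w \<longrightarrow> \<not> (\<exists>x\<in>V. E x u \<and> E x w))"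

definition inj_chromatic :: "'a set \<Rightarrow> ('a \<Rightarrow> 'a \<Rightarrow> bool) \<Rightarrow> nat" where
  "inj_chromatic V E = (LEAST k. \<exists>f. injective_coloring V E k f)"

definition sierp_verts :: "'a set \<Rightarrow> nat \<Rightarrow> 'a list set" where
  "sierp_verts V n = {u. length u = n \<and> set u \<subseteq> V}"

definition sierp_adj :: "('a \<Rightarrow> 'a \<Rightarrow> bool) \<Rightarrow> nat \<Rightarrow> 'a list \<Rightarrow> 'a list \<Rightarrow> bool" where
  "sierp_adj E n u v \<longleftrightarrow> length u = n \<and> length v = n \<and>
     (\<exists>d<n. (\<forall>i<d. u ! i = v ! i) \<and> E (u ! d) (v ! d) \<and>
        (\<forall>i. d < i \<and> i < n \<longrightarrow> u ! i = v ! d \<and> v ! i = u ! d))"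

definition complete_graph_E :: "nat \<Rightarrow> nat \<Rightarrow> nat \<Rightarrow> bool" where
  "complete_graph_E p i j \<longleftrightarrow> i < p \<and> j < p \<and> i \<noteq> j"

definition cycle_graph_E :: "nat \<Rightarrow> nat \<Rightarrow> nat \<Rightarrow> bool" where
  "cycle_graph_E k i j \<longleftrightarrow> i < k \<and> j < k \<and> (j = (i + 1) mod k \<or> i = (j + 1) mod k)"

end

theory Submission
  imports Defs
begin

lemma sv_len: "x \<in> sierp_verts V n \<Longrightarrow> length x = n"
  unfolding sierp_verts_def by auto
lemma sv_nth: "x \<in> sierp_verts V n \<Longrightarrow> i < n \<Longrightarrow> x!i \<in> V"
  unfolding sierp_verts_def by auto

lemma master:
  assumes sg: "simple_graph V E" and n: "n \<ge> 1"
  and rng: "\<forall>x\<in>sierp_verts V n. f x \<in> {1..K}"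
  and A: "\<And>x1 x2 c. x1 \<in> sierp_verts V n \<Longrightarrow> x2 \<in> sierp_verts V n \<Longrightarrow> (\<forall>i<n-1. x1!i = x2!i)
     \<Longrightarrow> x1!(n-1) \<noteq> x2!(n-1) \<Longrightarrow> E c (x1!(n-1)) \<Longrightarrow> E c (x2!(n-1)) \<Longrightarrow> f x1 \<noteq> f x2"
  and B: "\<And>x1 x2 d. x1 \<in> sierp_verts V n \<Longrightarrow> x2 \<in> sierp_verts V n \<Longrightarrow> d < n-1
     \<Longrightarrow> (\<forall>i<d. x1!i = x2!i) \<Longrightarrow> E (x2!d) (x1!d) \<Longrightarrow> (\<forall>i. d<i \<and> i<n \<longrightarrow> x1!i = x2!d)
     \<Longrightarrow> (\<forall>i. d<i \<and> i<n-1 \<longrightarrow> x2!i = x1!d) \<Longrightarrow> E (x1!d) (x2!(n-1)) \<Longrightarrow> f x1 \<noteq> f x2"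
  shows "injective_coloring (sierp_verts V n) (sierp_adj E n) K f"
  unfolding injective_coloring_def
proof (intro conjI)
  show "\<forall>v\<in>sierp_verts V n. f v \<in> {1..K}" using rng .
  have irr: "\<And>a. \<not> E a a" using sg unfolding simple_graph_def by auto
  show "\<forall>u\<in>sierp_verts V n. \<forall>w\<in>sierp_verts V n. u \<noteq> w \<and> f u = f w \<longrightarrow>
     \<not> (\<exists>x\<in>sierp_verts V n. sierp_adj E n x u \<and> sierp_adj E n x w)"
  proof (intro ballI impI notI)
    fix u w assume u: "u \<in> sierp_verts V n" and w: "w \<in> sierp_verts V n"
      and h: "u \<noteq> w \<and> f u = f w" and ex: "\<exists>x\<in>sierp_verts V n. sierp_adj E n x u \<and> sierp_adj E n x w"
    then obtain y where y: "y \<in> sierp_verts V n" "sierp_adj E n y u" "sierp_adj E n y w" by blast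
    from y(2) obtain d1 where d1: "d1 < n" "\<forall>i<d1. y!i = u!i" "E (y!d1) (u!d1)"
       "\<forall>i. d1 < i \<and> i < n \<longrightarrow> y!i = u!d1 \<and> u!i = y!d1" unfolding sierp_adj_def by blast
    from y(3) obtain d2 where d2: "d2 < n" "\<forall>i<d2. y!i = w!i" "E (y!d2) (w!d2)"
       "\<forall>i. d2 < i \<and> i < n \<longrightarrow> y!i = w!d2 \<and> w!i = y!d2" unfolding sierp_adj_def by blast
    have lu: "length u = n" and lw: "length w = n" using u w sv_len by auto
    consider (a) "d1 = n-1" "d2 = n-1" | (b) "d1 < n-1" "d2 = n-1" | (c) "d1 = n-1" "d2 < n-1"
      | (d) "d1 < n-1" "d2 < n-1" using d1(1) d2(1) by linarith
    then show False
    proof cases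
      case a
      have pre: "\<forall>i<n-1. u!i = w!i" using d1(2) d2(2) a by auto
      have "u!(n-1) \<noteq> w!(n-1)"
      proof
        assume "u!(n-1) = w!(n-1)"
        then have "\<forall>i<n. u!i = w!i" proof (intro allI impI)
          fix i assume "i < n" then consider "i < n-1" | "i = n-1" by linarith
          then show "u!i = w!i" using pre \<open>u!(n-1) = w!(n-1)\<close> by cases auto
        qed
        then have "u = w" using lu lw by (simp add: nth_equalityI)
        then show False using h by simp
      qed
      then show False using A[OF u w pre, of "y!(n-1)"] d1(3) d2(3) a h by simp
    next
      case b
      have "f u \<noteq> f w"
      proof (rule B[OF u w b(1)])
        show "\<forall>i<d1. u!i = w!i" using d1(2) d2(2) b by auto
        show "E (w!d1) (u!d1)" using d1(3) d2(2) b by auto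
        show "\<forall>i. d1<i \<and> i<n \<longrightarrow> u!i = w!d1" using d1(4) d2(2) b by auto
        show "\<forall>i. d1<i \<and> i<n-1 \<longrightarrow> w!i = u!d1" using d1(4) d2(2) b by auto
        have "y!(n-1) = u!d1" using d1(4) b n by auto
        then show "E (u!d1) (w!(n-1))" using d2(3) b by auto
      qed
      then show False using h by simp
    next
      case c
      have "f w \<noteq> f u"
      proof (rule B[OF w u c(2)])
        show "\<forall>i<d2. w!i = u!i" using d1(2) d2(2) c by auto
        show "E (u!d2) (w!d2)" using d2(3) d1(2) c by auto
        show "\<forall>i. d2<i \<and> i<n \<longrightarrow> w!i = u!d2" using d2(4) d1(2) c by auto
        show "\<forall>i. d2<i \<and> i<n-1 \<longrightarrow> u!i = w!d2" using d2(4) d1(2) c by auto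
        have "y!(n-1) = w!d2" using d2(4) c n by auto
        then show "E (w!d2) (u!(n-1))" using d1(3) c by auto
      qed
      then show False using h by simp
    next
      case d
      consider "d1 < d2" | "d2 < d1" | "d1 = d2" by linarith
      then show False
      proof cases
        case 1
        have "y!d2 = u!d1" using d1(4) 1 d2(1) by auto
        moreover have "y!(n-1) = u!d1" using d1(4) d n by auto
        moreover have "y!(n-1) = w!d2" using d2(4) d n by auto
        ultimately show False using d2(3) irr by simp
      next
        case 2
        have "y!d1 = w!d2" using d2(4) 2 d1(1) by auto
        moreover have "y!(n-1) = w!d2" using d2(4) d n by auto
        moreover have "y!(n-1) = u!d1" using d1(4) d n by auto
        ultimately show False using d1(3) irr by simp
      next
        case 3
        have "y!(n-1) = u!d1" using d1(4) d n by auto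
        moreover have "y!(n-1) = w!d2" using d2(4) d n by auto
        ultimately have eq: "u!d1 = w!d1" using 3 by simp
        have "\<forall>i<n. u!i = w!i"
        proof (intro allI impI)
          fix i assume "i < n"
          consider "i < d1" | "i = d1" | "d1 < i" by linarith
          then show "u!i = w!i"
          proof cases
            case 1 then show ?thesis using d1(2) d2(2) 3 by auto
          next
            case 2 then show ?thesis using eq by simp
          next
            case 3 then show ?thesis using d1(4) d2(4) \<open>d1 = d2\<close> \<open>i < n\<close> by auto
          qed
        qed
        then have "u = w" using lu lw by (simp add: nth_equalityI)
        then show False using h by simp
      qed
    qed
  qed
qed

lemma sg_irr: "simple_graph V E \<Longrightarrow> \<not> E a a" unfolding simple_graph_def by auto
lemma sg_V: "simple_graph V E \<Longrightarrow> E a b \<Longrightarrow> a \<in> V \<and> b \<in> V" unfolding simple_graph_def by auto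

lemma gscheme:
  assumes sg: "simple_graph V E" and n: "n \<ge> 2"
  and rng: "\<And>v u. v \<in> V \<Longrightarrow> u \<in> V \<Longrightarrow> g v u \<in> {1..K}"
  and g1: "\<And>v u w c. v \<in> V \<Longrightarrow> u \<noteq> w \<Longrightarrow> E c u \<Longrightarrow> E c w \<Longrightarrow> g v u \<noteq> g v w"
  and g2: "\<And>a b u. E a b \<Longrightarrow> E b u \<Longrightarrow> g b a \<noteq> g a u"
  and g3: "\<And>a b u. E a b \<Longrightarrow> E b u \<Longrightarrow> g a a \<noteq> g b u"
  shows "injective_coloring (sierp_verts V n) (sierp_adj E n) K (\<lambda>x. g (x!(n-2)) (x!(n-1)))"
proof (rule master[OF sg])
  show "n \<ge> 1" using n by simp
  show "\<forall>x\<in>sierp_verts V n. g (x!(n-2)) (x!(n-1)) \<in> {1..K}"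
  proof
    fix x assume x: "x \<in> sierp_verts V n"
    have "x!(n-2) \<in> V" "x!(n-1) \<in> V" using sv_nth[OF x] n by auto
    then show "g (x!(n-2)) (x!(n-1)) \<in> {1..K}" using rng by blast
  qed
next
  fix x1 x2 c assume x1: "x1 \<in> sierp_verts V n" and x2: "x2 \<in> sierp_verts V n"
    and pre: "\<forall>i<n-1. x1!i = x2!i" and ne: "x1!(n-1) \<noteq> x2!(n-1)" and e1: "E c (x1!(n-1))" and e2: "E c (x2!(n-1))"
  have "x1!(n-2) = x2!(n-2)" using pre n by auto
  moreover have "x1!(n-2) \<in> V" using sv_nth[OF x1] n by auto
  ultimately show "g (x1!(n-2)) (x1!(n-1)) \<noteq> g (x2!(n-2)) (x2!(n-1))"
    using g1[of "x1!(n-2)" "x1!(n-1)" "x2!(n-1)" c] ne e1 e2 by simp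
next
  fix x1 x2 d assume x1: "x1 \<in> sierp_verts V n" and x2: "x2 \<in> sierp_verts V n" and d: "d < n-1"
    and pre: "\<forall>i<d. x1!i = x2!i" and eab: "E (x2!d) (x1!d)" and s1: "\<forall>i. d<i \<and> i<n \<longrightarrow> x1!i = x2!d"
    and s2: "\<forall>i. d<i \<and> i<n-1 \<longrightarrow> x2!i = x1!d" and ebu: "E (x1!d) (x2!(n-1))"
  have l1: "x1!(n-1) = x2!d" using s1 d by auto
  consider "d = n-2" | "d < n-2" using d by linarith
  then show "g (x1!(n-2)) (x1!(n-1)) \<noteq> g (x2!(n-2)) (x2!(n-1))"
  proof cases
    case 1
    then show ?thesis using l1 g2[OF eab ebu] by simp
  next
    case 2
    have "x1!(n-2) = x2!d" using s1 2 n by auto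
    moreover have "x2!(n-2) = x1!d" using s2 2 n by auto
    ultimately show ?thesis using l1 g3[OF eab ebu] by simp
  qed
qed

lemma n1scheme:
  assumes sg: "simple_graph V E" and c: "injective_coloring V E K c"
  shows "injective_coloring (sierp_verts V 1) (sierp_adj E 1) K (\<lambda>x. c (x!0))"
proof (rule master[OF sg])
  show "\<forall>x\<in>sierp_verts V 1. c (x!0) \<in> {1..K}"
  proof
    fix x assume "x \<in> sierp_verts V 1" then have "x!0 \<in> V" using sv_nth by fastforce
    then show "c (x!0) \<in> {1..K}" using c unfolding injective_coloring_def by blast
  qed
next
  fix x1 x2 cc assume x1: "x1 \<in> sierp_verts V 1" and x2: "x2 \<in> sierp_verts V 1"
    and pre: "\<forall>i<1-1. x1!i = x2!i" and ne: "x1!(1-1) \<noteq> x2!(1-1)" and e1: "E cc (x1!(1-1))" and e2: "E cc (x2!(1-1))"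
  have "cc \<in> V" "x1!0 \<in> V" "x2!0 \<in> V" using sg_V[OF sg e1] sg_V[OF sg e2] by auto
  then show "c (x1!0) \<noteq> c (x2!0)" using c ne e1 e2 unfolding injective_coloring_def by auto
next
  fix x1 x2 d assume "d < 1 - (1::nat)" then show "c (x1!0) \<noteq> c (x2!0)" by simp
qed simp

lemma upper_general:
  assumes sg: "simple_graph V E" and n: "n \<ge> 2" and c: "injective_coloring V E K c"
  shows "injective_coloring (sierp_verts V n) (sierp_adj E n) (K+1)
     (\<lambda>x. (\<lambda>v u. if u = v then K+1 else c u) (x!(n-2)) (x!(n-1)))"
proof (rule gscheme[OF sg n])
  have cr: "\<And>u. u \<in> V \<Longrightarrow> c u \<in> {1..K}" using c unfolding injective_coloring_def by auto
  have ci: "\<And>u w x. u \<noteq> w \<Longrightarrow> E x u \<Longrightarrow> E x w \<Longrightarrow> c u \<noteq> c w"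
  proof -
    fix u w x assume "u \<noteq> w" "E x u" "E x w"
    then show "c u \<noteq> c w" using c sg_V[OF sg, of x u] sg_V[OF sg, of x w] unfolding injective_coloring_def by blast
  qed
  show "\<And>v u. v \<in> V \<Longrightarrow> u \<in> V \<Longrightarrow> (if u = v then K+1 else c u) \<in> {1..K+1}"
  proof -
    fix v u assume "v \<in> V" "u \<in> V" then have "c u \<in> {1..K}" using cr by blast
    then show "(if u = v then K+1 else c u) \<in> {1..K+1}" by auto
  qed
  have cle: "\<And>x u. E x u \<Longrightarrow> c u \<le> K"
  proof -
    fix x u assume "E x u" then have "u \<in> V" using sg_V[OF sg] by blast
    then show "c u \<le> K" using cr by auto
  qed
  show "\<And>v u w x. v \<in> V \<Longrightarrow> u \<noteq> w \<Longrightarrow> E x u \<Longrightarrow> E x w \<Longrightarrow> (if u = v then K+1 else c u) \<noteq> (if w = v then K+1 else c w)"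
  proof -
    fix v u w x assume "v \<in> V" "u \<noteq> w" "E x u" "E x w"
    then show "(if u = v then K+1 else c u) \<noteq> (if w = v then K+1 else c w)"
      using ci[of u w x] cle[of x u] cle[of x w] by auto
  qed
  show "\<And>a b u. E a b \<Longrightarrow> E b u \<Longrightarrow> (if a = b then K+1 else c a) \<noteq> (if u = a then K+1 else c u)"
  proof -
    fix a b u assume ab: "E a b" and bu: "E b u"
    have ba: "E b a" using ab sg unfolding simple_graph_def by auto
    have "a \<noteq> b" using ab sg_irr[OF sg] by auto
    then show "(if a = b then K+1 else c a) \<noteq> (if u = a then K+1 else c u)"
      using ci[of a u b] ba bu cle[of b a] by auto
  qed
  show "\<And>a b u. E a b \<Longrightarrow> E b u \<Longrightarrow> (if a = a then K+1 else c a) \<noteq> (if u = b then K+1 else c u)"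
  proof -
    fix a b u assume ab: "E a b" and bu: "E b u"
    have "u \<noteq> b" using bu sg_irr[OF sg] by auto
    then show "(if a = a then K+1 else c a) \<noteq> (if u = b then K+1 else c u)"
      using cle[OF bu] by auto
  qed
qed

primrec Hr :: "nat list \<Rightarrow> nat" where
  "Hr [] = 0" | "Hr (a # xs) = a * 2 ^ length xs + Hr xs"

lemma Hr_append: "Hr (xs @ ys) = 2 ^ length ys * Hr xs + Hr ys"
  by (induction xs) (auto simp: algebra_simps power_add)

lemma Hr_rep: "Hr (replicate j a) + a = 2 ^ j * a"
  by (induction j) (auto simp: algebra_simps)

lemma Hr_sym: "Hr (q @ [b] @ replicate j a) + a = Hr (q @ [a] @ replicate j b) + b"
proof -
  have "Hr (q @ [b] @ replicate j a) + a = 2 ^ (Suc j) * Hr q + b * 2^j + (Hr (replicate j a) + a)"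
    by (simp add: Hr_append algebra_simps)
  also have "\<dots> = 2 ^ (Suc j) * Hr q + b * 2^j + 2^j * a" using Hr_rep by simp
  finally have 1: "Hr (q @ [b] @ replicate j a) + a = 2 ^ (Suc j) * Hr q + b * 2^j + 2^j * a" .
  have "Hr (q @ [a] @ replicate j b) + b = 2 ^ (Suc j) * Hr q + a * 2^j + (Hr (replicate j b) + b)"
    by (simp add: Hr_append algebra_simps)
  also have "\<dots> = 2 ^ (Suc j) * Hr q + a * 2^j + 2^j * b" using Hr_rep by simp
  finally show ?thesis using 1 by simp
qed

lemma modne1: assumes "(u::nat) < b" "b < p" "(h + b) mod p = (h + u) mod p" shows False
proof -
  have "p dvd (h + b) - (h + u)" using assms mod_eq_dvd_iff_nat[of "h+u" "h+b" p] by simp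
  then have "p dvd b - u" by simp
  then have "p \<le> b - u" using assms by (intro dvd_imp_le) auto
  then show False using assms by simp
qed

lemma modne: assumes "(b::nat) < p" "u < p" "b \<noteq> u" shows "(h + b) mod p \<noteq> (h + u) mod p"
proof
  assume eq: "(h + b) mod p = (h + u) mod p"
  consider "u < b" | "b < u" using assms by linarith
  then show False
  proof cases
    case 1 from modne1[OF 1 assms(1) eq] show False .
  next
    case 2 from modne1[OF 2 assms(2) eq[symmetric]] show False .
  qed
qed

lemma decomp: assumes "length x = d + j + 2" "\<forall>i. d < i \<and> i < d+j+1 \<longrightarrow> x!i = c"
  shows "x = take d x @ [x!d] @ replicate j c @ [x!(d+j+1)]"
proof (rule nth_equalityI)
  show "length x = length (take d x @ [x!d] @ replicate j c @ [x!(d+j+1)])" using assms by simp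
  fix i assume "i < length x"
  then consider "i < d" | "i = d" | "d < i \<and> i < d+j+1" | "i = d+j+1" using assms by linarith
  then show "x!i = (take d x @ [x!d] @ replicate j c @ [x!(d+j+1)])!i"
  proof cases
    case 1 then show ?thesis using assms by (simp add: nth_append)
  next
    case 2 then show ?thesis using assms by (simp add: nth_append)
  next
    case 3 then show ?thesis using assms by (auto simp: nth_append)
  next
    case 4 then show ?thesis using assms by (simp add: nth_append)
  qed
qed

lemma Kp_sg: "simple_graph {0..<p} (complete_graph_E p)"
  unfolding simple_graph_def complete_graph_E_def by auto

definition FK :: "nat \<Rightarrow> nat list \<Rightarrow> nat" where
  "FK p x = (Hr (butlast x) + last x) mod p + 1"

lemma FK_snoc: "FK p (xs @ [z]) = (Hr xs + z) mod p + 1" unfolding FK_def by simp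

lemma Kp_upper:
  assumes n: "n \<ge> 1" and p: "p \<ge> 1"
  shows "injective_coloring (sierp_verts {0..<p} n) (sierp_adj (complete_graph_E p) n) p (FK p)"
proof (rule master[OF Kp_sg n])
  show "\<forall>x\<in>sierp_verts {0..<p} n. FK p x \<in> {1..p}" unfolding FK_def using p
    by (auto simp: Suc_le_eq)
next
  fix x1 x2 c assume x1: "x1 \<in> sierp_verts {0..<p} n" and x2: "x2 \<in> sierp_verts {0..<p} n"
    and pre: "\<forall>i<n-1. x1!i = x2!i" and ne: "x1!(n-1) \<noteq> x2!(n-1)"
  have l: "length x1 = n" "length x2 = n" using x1 x2 sv_len by auto
  have "butlast x1 = butlast x2" using pre l by (intro nth_equalityI) (auto simp: nth_butlast)
  moreover have ne1: "x1 \<noteq> []" "x2 \<noteq> []" using l n by auto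
  moreover have "last x1 = x1!(n-1)" "last x2 = x2!(n-1)" using l ne1 by (auto simp: last_conv_nth)
  moreover have "x1!(n-1) < p" "x2!(n-1) < p" using sv_nth[OF x1] sv_nth[OF x2] n by auto
  ultimately show "FK p x1 \<noteq> FK p x2" unfolding FK_def using modne ne by auto
next
  fix x1 x2 d assume x1: "x1 \<in> sierp_verts {0..<p} n" and x2: "x2 \<in> sierp_verts {0..<p} n" and d: "d < n-1"
    and pre: "\<forall>i<d. x1!i = x2!i" and eab: "complete_graph_E p (x2!d) (x1!d)" and s1: "\<forall>i. d<i \<and> i<n \<longrightarrow> x1!i = x2!d"
    and s2: "\<forall>i. d<i \<and> i<n-1 \<longrightarrow> x2!i = x1!d" and ebu: "complete_graph_E p (x1!d) (x2!(n-1))"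
  define j where "j = n - 2 - d"
  have l: "length x1 = d + j + 2" "length x2 = d + j + 2" using sv_len[OF x1] sv_len[OF x2] d unfolding j_def by auto
  have nj: "n - 1 = d + j + 1" using d unfolding j_def by auto
  have e1: "x1 = take d x1 @ [x1!d] @ replicate j (x2!d) @ [x1!(d+j+1)]"
    by (rule decomp[OF l(1)]) (use s1 nj in auto)
  have e2: "x2 = take d x2 @ [x2!d] @ replicate j (x1!d) @ [x2!(d+j+1)]"
    by (rule decomp[OF l(2)]) (use s2 nj in auto)
  have tk: "take d x2 = take d x1" using pre l d by (intro nth_equalityI) auto
  have l1: "x1!(d+j+1) = x2!d" using s1 nj d by auto
  define q where "q = take d x1"
  define a where "a = x2!d"
  define b where "b = x1!d"
  define u where "u = x2!(d+j+1)"
  have E1: "x1 = q @ [b] @ replicate j a @ [a]" using e1 l1 unfolding q_def a_def b_def by simp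
  have E2: "x2 = q @ [a] @ replicate j b @ [u]" using e2 tk unfolding q_def a_def b_def u_def by simp
  have bu: "b < p" "u < p" "b \<noteq> u" using ebu nj unfolding complete_graph_E_def b_def u_def by auto
  have "FK p x1 = (Hr (q @ [b] @ replicate j a) + a) mod p + 1"
    using FK_snoc[of p "q @ [b] @ replicate j a" a] E1 by simp
  also have "\<dots> = (Hr (q @ [a] @ replicate j b) + b) mod p + 1" using Hr_sym by simp
  finally have f1: "FK p x1 = (Hr (q @ [a] @ replicate j b) + b) mod p + 1" .
  have f2: "FK p x2 = (Hr (q @ [a] @ replicate j b) + u) mod p + 1"
    using FK_snoc[of p "q @ [a] @ replicate j b" u] E2 by simp
  show "FK p x1 \<noteq> FK p x2" using f1 f2 modne[OF bu] by simp
qed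

definition cf :: "nat \<Rightarrow> nat \<Rightarrow> nat" where
  "cf k t = (if k - 2 \<le> t then 3 else ((t+1) div 2) mod 2 + 1)"
definition rel :: "nat \<Rightarrow> nat \<Rightarrow> nat \<Rightarrow> nat" where
  "rel k v u = (if v \<le> u then u - v else u + k - v)"

lemma sucmod: "(i::nat) < k \<Longrightarrow> (i + 1) mod k = (if i = k - 1 then 0 else i + 1)"
proof (cases "i = k - 1")
  case True
  assume "i < k" then have "i + 1 = k" using True by arith
  then show ?thesis using True by simp
next
  case False
  assume "i < k" then have "i + 1 < k" using False by simp
  then show ?thesis using False by simp
qed

lemma cyc_E: "cycle_graph_E k i j \<longleftrightarrow> i < k \<and> j < k \<and>
   (j = (if i = k - 1 then 0 else i + 1) \<or> i = (if j = k - 1 then 0 else j + 1))"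
proof (cases "i < k \<and> j < k")
  case True
  then show ?thesis unfolding cycle_graph_E_def using sucmod[of i k] sucmod[of j k] by presburger
next
  case False
  then show ?thesis unfolding cycle_graph_E_def by auto
qed

lemma cfA: assumes "k \<ge> 5" "t < k" shows "cf k t \<noteq> cf k ((t+2) mod k)"
proof -
  consider "t + 2 < k" | "t + 2 = k" | "t + 2 = k + 1" using assms by linarith
  then show ?thesis
  proof cases
    case 1
    then have m: "(t+2) mod k = t + 2" by simp
    have "(t + 2 + 1) div 2 = (t+1) div 2 + 1" by simp
    then have "((t + 2 + 1) div 2) mod 2 \<noteq> ((t+1) div 2) mod 2" by presburger
    then show ?thesis unfolding m cf_def using 1 by auto
  next
    case 2
    then have m: "(t+2) mod k = 0" by simp
    show ?thesis unfolding m cf_def using 2 assms by auto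
  next
    case 3
    then have "t + 2 = 1 + k" by simp
    then have "(t+2) mod k = (1 + k) mod k" by simp
    also have "\<dots> = 1 mod k" by (rule mod_add_self2)
    also have "\<dots> = 1" using assms by simp
    finally have m: "(t+2) mod k = 1" .
    show ?thesis unfolding m cf_def using 3 assms by auto
  qed
qed

definition sc :: "nat \<Rightarrow> nat \<Rightarrow> nat" where "sc k x = (if x = k - 1 then 0 else x + 1)"

lemma cyc_E2: "cycle_graph_E k i j \<longleftrightarrow> i < k \<and> j < k \<and> (j = sc k i \<or> i = sc k j)"
  unfolding cyc_E sc_def by simp

lemma mod2: assumes "(x::nat) < k" "k \<ge> 3" shows "(x + 2) mod k = (if x + 2 < k then x + 2 else x + 2 - k)"
proof (cases "x + 2 < k")
  case True then show ?thesis by simp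
next
  case False
  then have "x + 2 = (x + 2 - k) + k" by simp
  then have "(x + 2) mod k = ((x + 2 - k) + k) mod k" by simp
  also have "\<dots> = (x + 2 - k) mod k" by (rule mod_add_self2)
  also have "\<dots> = x + 2 - k" using assms False by simp
  finally show ?thesis using False by simp
qed

lemma ss: assumes "x < k" "k \<ge> 3" shows "sc k (sc k x) = (x + 2) mod k"
  unfolding mod2[OF assms] sc_def using assms by auto

lemma sc_inj: "x < k \<Longrightarrow> y < k \<Longrightarrow> sc k x = sc k y \<Longrightarrow> x = y"
  unfolding sc_def by (auto split: if_splits)

lemma nbr2: assumes "k \<ge> 3" "u \<noteq> w" "cycle_graph_E k c u" "cycle_graph_E k c w"
  shows "w = (u+2) mod k \<or> u = (w+2) mod k"
proof -
  have lt: "u < k" "w < k" "c < k" using assms unfolding cyc_E2 by auto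
  consider "u = sc k c" "w = sc k c" | "u = sc k c" "c = sc k w" | "c = sc k u" "w = sc k c" | "c = sc k u" "c = sc k w"
    using assms unfolding cyc_E2 by blast
  then show ?thesis
  proof cases
    case 1 then show ?thesis using assms by simp
  next
    case 2 then show ?thesis using ss[OF lt(2) assms(1)] by simp
  next
    case 3 then show ?thesis using ss[OF lt(1) assms(1)] by simp
  next
    case 4 then show ?thesis using sc_inj[OF lt(1) lt(2)] assms by simp
  qed
qed

lemma rel_lt: "u < k \<Longrightarrow> v < k \<Longrightarrow> rel k v u < k" unfolding rel_def by auto

lemma relmod: assumes "u < k" "v < k" "k \<ge> 3" shows "rel k v ((u+2) mod k) = (rel k v u + 2) mod k"
  unfolding mod2[OF assms(1,3)] mod2[OF rel_lt[OF assms(1,2)] assms(3)] using assms unfolding rel_def by auto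

lemma rel_sc: assumes "x < k" "k \<ge> 3" shows "rel k x (sc k x) = 1" "rel k (sc k x) x = k - 1"
  using assms unfolding rel_def sc_def by auto

lemma rel_ss: assumes "x < k" "k \<ge> 3" shows "rel k x (sc k (sc k x)) = 2" "rel k (sc k (sc k x)) x = k - 2"
  using assms unfolding rel_def ss[OF assms] mod2[OF assms] by auto

lemma rel_0: "rel k x x = 0" unfolding rel_def by simp

lemma cf_vals: assumes "k \<ge> 5" shows "cf k 0 = 1" "cf k 1 = 2" "cf k 2 = 2" "cf k (k-1) = 3" "cf k (k-2) = 3"
  using assms unfolding cf_def by auto

lemma sc_lt: "x < k \<Longrightarrow> sc k x < k" unfolding sc_def by auto

lemma cyc2: assumes k: "k \<ge> 5" and ab: "cycle_graph_E k a b" and bu: "cycle_graph_E k b u"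
  shows "cf k (rel k b a) \<noteq> cf k (rel k a u)"
proof -
  have k3: "k \<ge> 3" using k by simp
  have lt: "a < k" "b < k" "u < k" using ab bu unfolding cyc_E2 by auto
  consider "b = sc k a" "u = sc k b" | "b = sc k a" "b = sc k u" | "a = sc k b" "u = sc k b" | "a = sc k b" "b = sc k u"
    using ab bu unfolding cyc_E2 by blast
  then show ?thesis
  proof cases
    case 1 then show ?thesis using rel_sc[OF lt(1) k3] rel_ss[OF lt(1) k3] cf_vals[OF k] by simp
  next
    case 2 then have "a = u" using sc_inj[OF lt(1) lt(3)] by simp
    then show ?thesis using 2 rel_sc[OF lt(1) k3] rel_0 cf_vals[OF k] by simp
  next
    case 3 then show ?thesis using rel_sc[OF lt(2) k3] rel_0 cf_vals[OF k] by simp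
  next
    case 4 then show ?thesis using rel_sc[OF lt(2) k3] rel_ss[OF lt(3) k3] cf_vals[OF k] by simp
  qed
qed

lemma cyc3: assumes k: "k \<ge> 5" and ab: "cycle_graph_E k a b" and bu: "cycle_graph_E k b u"
  shows "cf k (rel k a a) \<noteq> cf k (rel k b u)"
proof -
  have k3: "k \<ge> 3" using k by simp
  have lt: "a < k" "b < k" "u < k" using ab bu unfolding cyc_E2 by auto
  consider "u = sc k b" | "b = sc k u" using bu unfolding cyc_E2 by blast
  then show ?thesis
  proof cases
    case 1 then show ?thesis using rel_sc[OF lt(2) k3] rel_0 cf_vals[OF k] by simp
  next
    case 2 then show ?thesis using rel_sc[OF lt(3) k3] rel_0 cf_vals[OF k] by simp
  qed
qed

lemma cyc1: assumes k: "k \<ge> 5" and v: "v < k" and ne: "u \<noteq> w" and cu: "cycle_graph_E k c u" and cw: "cycle_graph_E k c w"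
  shows "cf k (rel k v u) \<noteq> cf k (rel k v w)"
proof -
  have k3: "k \<ge> 3" using k by simp
  have uw: "u < k" "w < k" using cu cw unfolding cycle_graph_E_def by auto
  from nbr2[OF k3 ne cu cw] consider "w = (u+2) mod k" | "u = (w+2) mod k" by blast
  then show ?thesis
  proof cases
    case 1
    have "rel k v w = (rel k v u + 2) mod k" using relmod[OF uw(1) v k3] 1 by simp
    then show ?thesis using cfA[OF k rel_lt[OF uw(1) v]] by simp
  next
    case 2
    have "rel k v u = (rel k v w + 2) mod k" using relmod[OF uw(2) v k3] 2 by simp
    then show ?thesis using cfA[OF k rel_lt[OF uw(2) v]] by simp
  qed
qed

lemma cyc4_aux: assumes "(k::nat) mod 4 = 0" "u < k" "k \<ge> 3" "w = (u+2) mod k"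
  shows "(u div 2) mod 2 \<noteq> (w div 2) mod 2"
proof (cases "u + 2 < k")
  case True
  then have w: "w = u + 2" using mod2[OF assms(2,3)] assms(4) by simp
  have "(u + 2) div 2 = u div 2 + 1" by simp
  then show ?thesis unfolding w by presburger
next
  case False
  then have w: "w = u + 2 - k" using mod2[OF assms(2,3)] assms(4) by simp
  obtain m where m: "k = 4 * m" using assms(1) by auto
  have "w < 2" using w False assms(2) by simp
  then have w0: "w div 2 = 0" by simp
  have "u = 4 * m - 2 \<or> u = 4 * m - 1" using False assms(2) m by auto
  then have "u div 2 = 2 * m - 1" using m assms(3) by auto
  moreover have "m \<ge> 1" using m assms(3) by simp
  ultimately have "(u div 2) mod 2 = 1" by presburger
  then show ?thesis using w0 by simp
qed

lemma cyc4: assumes "k mod 4 = 0" "k \<ge> 3" "u \<noteq> w" "cycle_graph_E k c u" "cycle_graph_E k c w"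
  shows "(u div 2) mod 2 \<noteq> (w div 2) mod 2"
proof -
  have lt: "u < k" "w < k" using assms unfolding cycle_graph_E_def by auto
  from nbr2[OF assms(2-5)] consider "w = (u+2) mod k" | "u = (w+2) mod k" by blast
  then show ?thesis
  proof cases
    case 1 then show ?thesis using cyc4_aux[OF assms(1) lt(1) assms(2)] by simp
  next
    case 2 then show ?thesis using cyc4_aux[OF assms(1) lt(2) assms(2)] by simp
  qed
qed

lemma ic_exists: assumes "finite V" shows "\<exists>f. injective_coloring V E (card V) f"
proof -
  obtain h where h: "bij_betw h V {0..<card V}" using ex_bij_betw_finite_nat[OF assms] by blast
  have "injective_coloring V E (card V) (\<lambda>v. h v + 1)"
    unfolding injective_coloring_def
  proof (intro conjI ballI impI)
    fix v assume "v \<in> V" then show "h v + 1 \<in> {1..card V}" using h bij_betwE by fastforce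
  next
    fix u w assume "u \<in> V" "w \<in> V" "u \<noteq> w \<and> h u + 1 = h w + 1"
    then have False using h unfolding bij_betw_def inj_on_def by auto
    then show "\<not> (\<exists>x\<in>V. E x u \<and> E x w)" by simp
  qed
  then show ?thesis by blast
qed

lemma ic_LeastI: assumes fin: "finite V" shows "\<exists>f. injective_coloring V E (inj_chromatic V E) f"
proof -
  have "\<exists>k f. injective_coloring V E k f" using ic_exists[OF fin] by blast
  then show ?thesis unfolding inj_chromatic_def by (rule LeastI_ex)
qed

lemma ic_le: "injective_coloring V E K f \<Longrightarrow> inj_chromatic V E \<le> K"
  unfolding inj_chromatic_def by (rule Least_le) blast

lemma sv_finite: "finite V \<Longrightarrow> finite (sierp_verts V n)"
proof -
  assume "finite V"
  then have "finite {xs. set xs \<subseteq> V \<and> length xs = n}" by (rule finite_lists_length_eq)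
  moreover have "sierp_verts V n = {xs. set xs \<subseteq> V \<and> length xs = n}" unfolding sierp_verts_def by auto
  ultimately show ?thesis by simp
qed

lemma ic_two: "injective_coloring V E K f \<Longrightarrow> u \<in> V \<Longrightarrow> w \<in> V \<Longrightarrow> x \<in> V \<Longrightarrow> u \<noteq> w
   \<Longrightarrow> E x u \<Longrightarrow> E x w \<Longrightarrow> f u \<noteq> f w"
  unfolding injective_coloring_def by blast

lemma ic_rng: "injective_coloring V E K f \<Longrightarrow> u \<in> V \<Longrightarrow> f u \<in> {1..K}"
  unfolding injective_coloring_def by blast

lemma adj_last: "length w = m \<Longrightarrow> E a b \<Longrightarrow> sierp_adj E (Suc m) (w@[a]) (w@[b])"
  unfolding sierp_adj_def by (intro conjI exI[of _ m]) (auto simp: nth_append)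

lemma adj_swap: assumes "length w = m" "E a b" shows "sierp_adj E (m+2) (w@[a,b]) (w@[b,a])"
  unfolding sierp_adj_def
proof (intro conjI exI[of _ m])
  show "\<forall>i. m < i \<and> i < m + 2 \<longrightarrow> (w @ [a, b]) ! i = (w @ [b, a]) ! m \<and> (w @ [b, a]) ! i = (w @ [a, b]) ! m"
  proof (intro allI impI)
    fix i assume "m < i \<and> i < m + 2" then have "i = Suc m" by auto
    then show "(w @ [a, b]) ! i = (w @ [b, a]) ! m \<and> (w @ [b, a]) ! i = (w @ [a, b]) ! m"
      using assms by (simp add: nth_append)
  qed
qed (use assms in \<open>auto simp: nth_append\<close>)

lemma lower_general: assumes sg: "simple_graph V E" and n: "n \<ge> 1"
  shows "inj_chromatic V E \<le> inj_chromatic (sierp_verts V n) (sierp_adj E n)"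
proof (cases "V = {}")
  case True
  have "injective_coloring V E 0 (\<lambda>_. 0)" using True unfolding injective_coloring_def by simp
  then show ?thesis using ic_le by fastforce
next
  case False
  then obtain v0 where v0: "v0 \<in> V" by blast
  have fin: "finite V" using sg unfolding simple_graph_def by simp
  obtain f where f: "injective_coloring (sierp_verts V n) (sierp_adj E n) (inj_chromatic (sierp_verts V n) (sierp_adj E n)) f"
    using ic_LeastI[OF sv_finite[OF fin]] by blast
  define w where "w = replicate (n-1) v0"
  have lw: "length w = n - 1" unfolding w_def by simp
  have Sn: "Suc (n-1) = n" using n by simp
  have ein: "\<And>u. u \<in> V \<Longrightarrow> w @ [u] \<in> sierp_verts V n" unfolding sierp_verts_def w_def using v0 n by auto
  have "injective_coloring V E (inj_chromatic (sierp_verts V n) (sierp_adj E n)) (\<lambda>u. f (w @ [u]))"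
    unfolding injective_coloring_def
  proof (intro conjI ballI impI notI)
    fix u assume "u \<in> V" then show "f (w @ [u]) \<in> {1..inj_chromatic (sierp_verts V n) (sierp_adj E n)}"
      using ic_rng[OF f ein] by blast
  next
    fix u u' assume u: "u \<in> V" and u': "u' \<in> V" and h: "u \<noteq> u' \<and> f (w @ [u]) = f (w @ [u'])"
      and ex: "\<exists>x\<in>V. E x u \<and> E x u'"
    then obtain x where x: "x \<in> V" "E x u" "E x u'" by blast
    have "sierp_adj E n (w@[x]) (w@[u])" "sierp_adj E n (w@[x]) (w@[u'])"
      using adj_last[of w "n-1" E x u, OF lw x(2)] adj_last[of w "n-1" E x u', OF lw x(3)] Sn by auto
    moreover have "w @ [u] \<noteq> w @ [u']" using h by simp
    ultimately have "f (w @ [u]) \<noteq> f (w @ [u'])" using ic_two[OF f ein[OF u] ein[OF u'] ein[OF x(1)]] by blast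
    then show False using h by simp
  qed
  then show ?thesis by (rule ic_le)
qed

lemma upper_general_ic: assumes sg: "simple_graph V E" and n: "n \<ge> 1"
  shows "inj_chromatic (sierp_verts V n) (sierp_adj E n) \<le> inj_chromatic V E + 1"
proof -
  have fin: "finite V" using sg unfolding simple_graph_def by simp
  obtain c where c: "injective_coloring V E (inj_chromatic V E) c" using ic_LeastI[OF fin] by blast
  show ?thesis
  proof (cases "n = 1")
    case True
    then show ?thesis using ic_le[OF n1scheme[OF sg c]] by simp
  next
    case False
    then have "n \<ge> 2" using n by simp
    then show ?thesis using ic_le[OF upper_general[OF sg _ c]] by blast
  qed
qed

lemma n1_ic: assumes sg: "simple_graph V E"
  shows "inj_chromatic (sierp_verts V 1) (sierp_adj E 1) \<le> inj_chromatic V E"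
proof -
  have fin: "finite V" using sg unfolding simple_graph_def by simp
  obtain c where c: "injective_coloring V E (inj_chromatic V E) c" using ic_LeastI[OF fin] by blast
  show ?thesis using ic_le[OF n1scheme[OF sg c]] .
qed

lemma Kp_lower: assumes p: "p \<ge> 3" shows "p \<le> inj_chromatic {0..<p} (complete_graph_E p)"
proof -
  obtain c where c: "injective_coloring {0..<p} (complete_graph_E p) (inj_chromatic {0..<p} (complete_graph_E p)) c"
    using ic_LeastI[of "{0..<p}"] by blast
  have "inj_on c {0..<p}"
  proof (rule inj_onI)
    fix i j assume i: "i \<in> {0..<p}" and j: "j \<in> {0..<p}" and eq: "c i = c j"
    show "i = j"
    proof (rule ccontr)
      assume ne: "i \<noteq> j"
      have "\<exists>x\<in>{0,1,2::nat}. x \<noteq> i \<and> x \<noteq> j" by auto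
      then obtain x where x0: "x \<in> {0,1,2::nat}" "x \<noteq> i" "x \<noteq> j" by blast
      then have x: "x < p" "x \<noteq> i" "x \<noteq> j" using p by auto
      have "c i \<noteq> c j" using ic_two[OF c i j, of x] x ne i j unfolding complete_graph_E_def by auto
      then show False using eq by simp
    qed
  qed
  moreover have "c ` {0..<p} \<subseteq> {1..inj_chromatic {0..<p} (complete_graph_E p)}" using ic_rng[OF c] by blast
  ultimately have "card {0..<p} \<le> card {1..inj_chromatic {0..<p} (complete_graph_E p)}"
    by (rule card_inj_on_le) simp
  then show ?thesis by simp
qed

lemma cyc_sg: assumes "k \<ge> 3" shows "simple_graph {0..<k} (cycle_graph_E k)"
proof -
  have "\<And>u. u < k \<Longrightarrow> u \<noteq> (u + 1) mod k"
  proof -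
    fix u assume u: "u < k"
    show "u \<noteq> (u + 1) mod k"
    proof (cases "u + 1 < k")
      case True then show ?thesis by simp
    next
      case False then have "u + 1 = k" using u by simp
      then show ?thesis using assms by simp
    qed
  qed
  then show ?thesis unfolding simple_graph_def cycle_graph_E_def by auto
qed

lemma cyc_lower3: assumes k: "k \<ge> 3" "k mod 4 \<noteq> 0"
  and f: "injective_coloring {0..<k} (cycle_graph_E k) K f" shows "K \<ge> 3"
proof (rule ccontr)
  assume "\<not> K \<ge> 3" then have K: "K \<le> 2" by simp
  have rng: "\<And>t. t < k \<Longrightarrow> f t = 1 \<or> f t = 2" using ic_rng[OF f] K by fastforce
  have step: "f ((t+2) mod k) = 3 - f t" if t: "t < k" for t
  proof -
    have ne: "t \<noteq> (t+2) mod k" using t k(1) by (auto simp: mod_if)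
    have e1: "cycle_graph_E k ((t+1) mod k) t" unfolding cycle_graph_E_def using t k by auto
    have "(t+2) mod k = ((t+1) mod k + 1) mod k" using mod_add_left_eq[of "t+1" k 1] by simp
    then have e2: "cycle_graph_E k ((t+1) mod k) ((t+2) mod k)" unfolding cycle_graph_E_def using k by auto
    have "f t \<noteq> f ((t+2) mod k)" using ic_two[OF f _ _ _ ne e1 e2] t k by auto
    then show ?thesis using rng[OF t] rng[of "(t+2) mod k"] k by auto
  qed
  have all: "f ((2*j) mod k) = (if even j then f 0 else 3 - f 0)" for j
  proof (induction j)
    case 0 then show ?case by simp
  next
    case (Suc j)
    have "(2 * Suc j) mod k = ((2*j) mod k + 2) mod k" using mod_add_left_eq[of "2*j" k 2] by simp
    moreover have "(2*j) mod k < k" using k by simp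
    ultimately have "f ((2 * Suc j) mod k) = 3 - f ((2*j) mod k)" using step[of "(2*j) mod k"] by simp
    moreover have "f 0 = 1 \<or> f 0 = 2" using rng[of 0] k by simp
    ultimately show ?case using Suc by auto
  qed
  obtain j0 where j0: "odd j0" "(2*j0) mod k = 0"
  proof (cases "odd k")
    case True then show ?thesis using that[of k] by simp
  next
    case False
    then have kk: "2 * (k div 2) = k" by simp
    have "odd (k div 2)" using False k(2) by presburger
    then show ?thesis using that[of "k div 2"] kk by simp
  qed
  then have "f 0 = 3 - f 0" using all[of j0] by simp
  moreover have "f 0 = 1 \<or> f 0 = 2" using rng[of 0] k by simp
  ultimately show False by auto
qed

lemma cyc3_eq: "cycle_graph_E 3 = complete_graph_E 3"
proof (intro ext)
  fix i j :: nat
  have "cycle_graph_E 3 i j \<longleftrightarrow> i < 3 \<and> j < 3 \<and> (j = (if i = 2 then 0 else i + 1) \<or> i = (if j = 2 then 0 else j + 1))"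
    unfolding cyc_E2 sc_def by simp
  also have "\<dots> \<longleftrightarrow> i < 3 \<and> j < 3 \<and> i \<noteq> j" by (auto split: if_splits)
  finally show "cycle_graph_E 3 i j = complete_graph_E 3 i j" unfolding complete_graph_E_def .
qed

lemma part1: assumes "simple_graph V E" "n \<ge> 1"
  shows "inj_chromatic V E \<le> inj_chromatic (sierp_verts V n) (sierp_adj E n) \<and>
            inj_chromatic (sierp_verts V n) (sierp_adj E n) \<le> inj_chromatic V E + 1"
  using lower_general[OF assms] upper_general_ic[OF assms] by simp

lemma part2: assumes p: "p \<ge> 3" and n: "n \<ge> 1"
  shows "inj_chromatic (sierp_verts {0..<p} n) (sierp_adj (complete_graph_E p) n)
              = inj_chromatic {0..<p} (complete_graph_E p)"
proof -
  have "inj_chromatic (sierp_verts {0..<p} n) (sierp_adj (complete_graph_E p) n) \<le> p"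
    using ic_le[OF Kp_upper[OF n]] p by simp
  moreover have "p \<le> inj_chromatic {0..<p} (complete_graph_E p)" using Kp_lower[OF p] .
  moreover have "inj_chromatic {0..<p} (complete_graph_E p) \<le> inj_chromatic (sierp_verts {0..<p} n) (sierp_adj (complete_graph_E p) n)"
    using lower_general[OF Kp_sg n] .
  ultimately show ?thesis by simp
qed

lemma cyc_low3: assumes "k \<ge> 3" "k mod 4 \<noteq> 0" shows "3 \<le> inj_chromatic {0..<k} (cycle_graph_E k)"
proof -
  obtain f where f: "injective_coloring {0..<k} (cycle_graph_E k) (inj_chromatic {0..<k} (cycle_graph_E k)) f"
    using ic_LeastI[of "{0..<k}"] by blast
  show ?thesis using cyc_lower3[OF assms f] .
qed

lemma part3: assumes k: "k \<ge> 3" "k mod 4 \<noteq> 0" and n: "n \<ge> 1"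
  shows "inj_chromatic (sierp_verts {0..<k} n) (sierp_adj (cycle_graph_E k) n)
              = inj_chromatic {0..<k} (cycle_graph_E k)"
proof (cases "k = 3")
  case True
  then show ?thesis using part2[of 3 n] n cyc3_eq by simp
next
  case False
  then have k5: "k \<ge> 5" using k by presburger
  have sg: "simple_graph {0..<k} (cycle_graph_E k)" using cyc_sg k by simp
  have lo: "inj_chromatic {0..<k} (cycle_graph_E k) \<le> inj_chromatic (sierp_verts {0..<k} n) (sierp_adj (cycle_graph_E k) n)"
    using lower_general[OF sg n] .
  show ?thesis
  proof (cases "n = 1")
    case True
    then show ?thesis using lo n1_ic[OF sg] by simp
  next
    case False
    then have n2: "n \<ge> 2" using n by simp
    have "injective_coloring (sierp_verts {0..<k} n) (sierp_adj (cycle_graph_E k) n) 3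
       (\<lambda>x. (\<lambda>v u. cf k (rel k v u)) (x!(n-2)) (x!(n-1)))"
    proof (rule gscheme[OF sg n2])
      show "\<And>v u. v \<in> {0..<k} \<Longrightarrow> u \<in> {0..<k} \<Longrightarrow> cf k (rel k v u) \<in> {1..3}"
        unfolding cf_def by auto
      show "\<And>v u w c. v \<in> {0..<k} \<Longrightarrow> u \<noteq> w \<Longrightarrow> cycle_graph_E k c u \<Longrightarrow> cycle_graph_E k c w \<Longrightarrow>
          cf k (rel k v u) \<noteq> cf k (rel k v w)"
        using cyc1[OF k5] by simp
      show "\<And>a b u. cycle_graph_E k a b \<Longrightarrow> cycle_graph_E k b u \<Longrightarrow> cf k (rel k b a) \<noteq> cf k (rel k a u)"
        using cyc2[OF k5] by blast
      show "\<And>a b u. cycle_graph_E k a b \<Longrightarrow> cycle_graph_E k b u \<Longrightarrow> cf k (rel k a a) \<noteq> cf k (rel k b u)"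
        using cyc3[OF k5] by blast
    qed
    then have "inj_chromatic (sierp_verts {0..<k} n) (sierp_adj (cycle_graph_E k) n) \<le> 3" by (rule ic_le)
    then show ?thesis using lo cyc_low3[OF k] by simp
  qed
qed

lemma part4: assumes k: "k \<ge> 3" "k mod 4 = 0" and n: "n \<ge> 2"
  shows "inj_chromatic (sierp_verts {0..<k} n) (sierp_adj (cycle_graph_E k) n)
              = inj_chromatic {0..<k} (cycle_graph_E k) + 1"
proof -
  have k4: "k \<ge> 4" using k by presburger
  have sg: "simple_graph {0..<k} (cycle_graph_E k)" using cyc_sg k by simp
  have e10: "cycle_graph_E k 1 0" "cycle_graph_E k 1 2" "cycle_graph_E k 0 1"
    using k4 unfolding cycle_graph_E_def by auto
  have c2: "inj_chromatic {0..<k} (cycle_graph_E k) = 2"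
  proof -
    have "injective_coloring {0..<k} (cycle_graph_E k) 2 (\<lambda>u. (u div 2) mod 2 + 1)"
      unfolding injective_coloring_def
    proof (intro conjI ballI impI notI)
      fix v :: nat show "(v div 2) mod 2 + 1 \<in> {1..2}" by auto
    next
      fix u w assume "u \<in> {0..<k}" "w \<in> {0..<k}" and h: "u \<noteq> w \<and> (u div 2) mod 2 + 1 = (w div 2) mod 2 + 1"
        and "\<exists>x\<in>{0..<k}. cycle_graph_E k x u \<and> cycle_graph_E k x w"
      then obtain x where "cycle_graph_E k x u" "cycle_graph_E k x w" by blast
      then show False using cyc4[OF k(2) k(1)] h by fastforce
    qed
    then have le: "inj_chromatic {0..<k} (cycle_graph_E k) \<le> 2" by (rule ic_le)
    obtain f where f: "injective_coloring {0..<k} (cycle_graph_E k) (inj_chromatic {0..<k} (cycle_graph_E k)) f"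
      using ic_LeastI[of "{0..<k}"] by blast
    have "f 0 \<noteq> f 2" using ic_two[OF f, of 0 2 1] e10 k4 by simp
    moreover have "f 0 \<in> {1..inj_chromatic {0..<k} (cycle_graph_E k)}" "f 2 \<in> {1..inj_chromatic {0..<k} (cycle_graph_E k)}"
      using ic_rng[OF f] k4 by auto
    ultimately have "2 \<le> inj_chromatic {0..<k} (cycle_graph_E k)" by auto
    then show ?thesis using le by simp
  qed
  have up: "inj_chromatic (sierp_verts {0..<k} n) (sierp_adj (cycle_graph_E k) n) \<le> 3"
    using upper_general_ic[OF sg] n c2 by simp
  obtain f where f: "injective_coloring (sierp_verts {0..<k} n) (sierp_adj (cycle_graph_E k) n)
       (inj_chromatic (sierp_verts {0..<k} n) (sierp_adj (cycle_graph_E k) n)) f"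
    using ic_LeastI[OF sv_finite[of "{0..<k}"]] by blast
  define w where "w = replicate (n-2) (0::nat)"
  have lw: "length w = n - 2" unfolding w_def by simp
  have mem: "\<And>a b. a < k \<Longrightarrow> b < k \<Longrightarrow> w @ [a, b] \<in> sierp_verts {0..<k} n"
    unfolding sierp_verts_def w_def using n k4 by auto
  have n1: "Suc (n - 1) = n" "n - 2 + 2 = n" using n by auto
  have lw1: "length (w @ [0]) = n - 1" using lw n by simp
  have a1: "sierp_adj (cycle_graph_E k) n (w@[0,1]) (w@[0,0])"
    using adj_last[of "w@[0]" "n-1" "cycle_graph_E k" 1 0, OF lw1 e10(1)] n1 by simp
  have a2: "sierp_adj (cycle_graph_E k) n (w@[0,1]) (w@[0,2])"
    using adj_last[of "w@[0]" "n-1" "cycle_graph_E k" 1 2, OF lw1 e10(2)] n1 by simp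
  have a3: "sierp_adj (cycle_graph_E k) n (w@[0,1]) (w@[1,0])"
    using adj_swap[of w "n-2" "cycle_graph_E k" 0 1, OF lw e10(3)] n1 by simp
  have m: "w@[0,1] \<in> sierp_verts {0..<k} n" "w@[0,0] \<in> sierp_verts {0..<k} n"
    "w@[0,2] \<in> sierp_verts {0..<k} n" "w@[1,0] \<in> sierp_verts {0..<k} n" using mem k4 by auto
  have d: "f (w@[0,0]) \<noteq> f (w@[0,2])" "f (w@[0,0]) \<noteq> f (w@[1,0])" "f (w@[0,2]) \<noteq> f (w@[1,0])"
    using ic_two[OF f m(2) m(3) m(1)] ic_two[OF f m(2) m(4) m(1)] ic_two[OF f m(3) m(4) m(1)] a1 a2 a3 by auto
  have r: "f (w@[0,0]) \<in> {1..inj_chromatic (sierp_verts {0..<k} n) (sierp_adj (cycle_graph_E k) n)}"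
    "f (w@[0,2]) \<in> {1..inj_chromatic (sierp_verts {0..<k} n) (sierp_adj (cycle_graph_E k) n)}"
    "f (w@[1,0]) \<in> {1..inj_chromatic (sierp_verts {0..<k} n) (sierp_adj (cycle_graph_E k) n)}"
    using ic_rng[OF f] m by auto
  have "3 \<le> inj_chromatic (sierp_verts {0..<k} n) (sierp_adj (cycle_graph_E k) n)"
    using d r by auto
  then show ?thesis using up c2 by simp
qed

theorem mainTheorem4:
  shows "(\<forall>(V :: 'a set) E (n :: nat). simple_graph V E \<and> n \<ge> 1 \<longrightarrow>
            inj_chromatic V E \<le> inj_chromatic (sierp_verts V n) (sierp_adj E n) \<and>
            inj_chromatic (sierp_verts V n) (sierp_adj E n) \<le> inj_chromatic V E + 1)
       \<and> (\<forall>p n :: nat. p \<ge> 3 \<and> n \<ge> 1 \<longrightarrow>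
            inj_chromatic (sierp_verts {0..<p} n) (sierp_adj (complete_graph_E p) n)
              = inj_chromatic {0..<p} (complete_graph_E p))
       \<and> (\<forall>k n :: nat. k \<ge> 3 \<and> k mod 4 \<noteq> 0 \<and> n \<ge> 1 \<longrightarrow>
            inj_chromatic (sierp_verts {0..<k} n) (sierp_adj (cycle_graph_E k) n)
              = inj_chromatic {0..<k} (cycle_graph_E k))
       \<and> (\<forall>k n :: nat. k \<ge> 3 \<and> k mod 4 = 0 \<and> n \<ge> 2 \<longrightarrow>
            inj_chromatic (sierp_verts {0..<k} n) (sierp_adj (cycle_graph_E k) n)
              = inj_chromatic {0..<k} (cycle_graph_E k) + 1)"
  apply (intro conjI)
     apply (intro allI impI, rule part1; simp)
    apply (intro allI impI, rule part2; simp)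
   apply (intro allI impI, rule part3; simp)
  apply (intro allI impI, rule part4; simp)
  done

end
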